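(* Let $d=4$ and consider the channel $\mathcal C(\rho)=\sum_{k=1}^4\langle k|\rho|k\rangle\,\gamma_k$ with $\gamma_1=|1\rangle\langle1|$, $\gamma_2=\tfrac13|2\rangle\langle2|+\tfrac23|1\rangle\langle1|$, $\gamma_3=\tfrac23|2\rangle\langle2|+\tfrac13|1\rangle\langle1|$, $\gamma_4=|2\rangle\langle2|$. Then $\mathcal C$ maps every passive state to a passive state, and for $\rho=\tfrac13(|1\rangle\langle1|+|3\rangle\langle3|+|4\rangle\langle4|)$ one has $\mathsf{Erg}(\rho)=(E_4-E_2)/3$ and $\mathsf{Erg}(\mathcal C(\rho))=(E_2-E_1)/9$. Consequently, whenever $E_2-E_1>3(E_4-E_2)$, $\mathcal C$ is passivity-preserving but strictly increases the ergotropy of $\rho$.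
   Context: $S$ is a $d$-dimensional quantum system with non-degenerate Hamiltonian $H=\sum_{i=1}^d E_i|i\rangle\langle i|$, $E_1<\dots<E_d$. The ergotropy of a state $\rho$ is $\mathsf{Erg}(\rho)=\mathrm{Tr}[H\rho]-\min_U\mathrm{Tr}[HU\rho U^\dagger]$ (minimum over unitaries). A state is passive if it is of the form $\sum_i p_i|i\rangle\langle i|$ with $p_1\ge\dots\ge p_d$ (equivalently, it has zero ergotropy). *)

theory Defs
  imports "HOL-Analysis.Analysis"
begin

(* Matrices are complex^'n^'n (HOL-Analysis); basis vector |i> of the paper
   (i = 1..d) is index i-1 of the finite index type 'n (for d = 4: type 4,
   elements 0,1,2,3 in increasing order). *)

definition adj :: "complex^'n^'n \<Rightarrow> complex^'n^'n" where
  "adj A = (\<chi> i j. cnj (A $ j $ i))"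

definition unitary_mat :: "complex^'n^'n \<Rightarrow> bool" where
  "unitary_mat U \<longleftrightarrow> U ** adj U = mat 1 \<and> adj U ** U = mat 1"

definition diag_mat :: "('n \<Rightarrow> complex) \<Rightarrow> complex^'n^'n" where
  "diag_mat f = (\<chi> i j. if i = j then f i else 0)"

definition psd :: "complex^'n^'n \<Rightarrow> bool" where
  "psd A \<longleftrightarrow> (\<forall>x::complex^'n. (\<Sum>i\<in>UNIV. cnj (x $ i) * (A *v x) $ i) \<in> \<real> \<and>
                               0 \<le> Re (\<Sum>i\<in>UNIV. cnj (x $ i) * (A *v x) $ i))"

definition is_state :: "complex^'n^'n \<Rightarrow> bool" where
  "is_state \<rho> \<longleftrightarrow> adj \<rho> = \<rho> \<and> psd \<rho> \<and> trace \<rho> = 1"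

definition hamiltonian :: "('n \<Rightarrow> real) \<Rightarrow> complex^'n^'n" where
  "hamiltonian E = diag_mat (\<lambda>i. complex_of_real (E i))"

definition ergotropy :: "('n \<Rightarrow> real) \<Rightarrow> complex^'n^'n \<Rightarrow> real" where
  "ergotropy E \<rho> = Re (trace (hamiltonian E ** \<rho>))
     - (INF U \<in> {U. unitary_mat U}. Re (trace (hamiltonian E ** (U ** \<rho> ** adj U))))"

definition passive_state :: "complex^('n::{finite,linorder})^('n::{finite,linorder}) \<Rightarrow> bool" where
  "passive_state \<rho> \<longleftrightarrow> is_state \<rho> \<and>
     (\<exists>p. \<rho> = diag_mat (\<lambda>i. complex_of_real (p i)) \<and>
                        (\<forall>i j. i \<le> j \<longrightarrow> p j \<le> p i))"

definition gammaW :: "4 \<Rightarrow> real" where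
  "gammaW k = (if k = 0 then 1 else if k = 1 then 2/3 else if k = 2 then 1/3 else 0)"

definition gamma :: "4 \<Rightarrow> complex^4^4" where
  "gamma k = diag_mat (\<lambda>i. if i = 0 then complex_of_real (gammaW k)
                           else if i = 1 then complex_of_real (1 - gammaW k) else 0)"

definition chanC :: "complex^4^4 \<Rightarrow> complex^4^4" where
  "chanC \<rho> = (\<chi> i j. \<Sum>k\<in>UNIV. \<rho> $ k $ k * gamma k $ i $ j)"

definition rho0 :: "complex^4^4" where
  "rho0 = diag_mat (\<lambda>i. if i = 1 then 0 else 1/3)"

end

theory Submission imports Defs begin
lemma four0: "(4::4) = 0" by simp
lemma U4: "(UNIV::4 set) = {0,1,2,3}"
proof -
  have "(UNIV::4 set) = {1,2,3,4}" by (rule UNIV_4)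
  also have "\<dots> = {0,1,2,3}" unfolding four0 by blast
  finally show ?thesis .
qed
lemma s4: "sum f (UNIV::4 set) = f 0 + f 1 + f 2 + f 3"
proof -
  have "sum f (UNIV::4 set) = f 1 + f 2 + f 3 + f 4" by (rule sum_4)
  then show ?thesis unfolding four0 by (simp only: ac_simps)
qed
lemma ord4: "(0::4) < 1" "(1::4) < 2" "(2::4) < 3" "(0::4) < 2" "(0::4)<3" "(1::4)<3"
  by (simp_all add: less_bit0_def bit0.Rep_numeral bit0.Rep_0 bit0.Rep_1)

definition wt :: "complex^'n^'n \<Rightarrow> 'n \<Rightarrow> 'n \<Rightarrow> real" where
  "wt U i k = (cmod (U$i$k))^2"

lemma cnj_mult_self: "cnj z * z = complex_of_real ((cmod z)^2)"
  by (metis complex_norm_square of_real_power mult.commute)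
lemma mult_cnj_self: "z * cnj z = complex_of_real ((cmod z)^2)"
  by (metis complex_norm_square of_real_power)
lemma if0_mult: "(if P then a else 0) * (b::'a::semiring_0) = (if P then a * b else 0)" by simp
lemma mult_if0: "(b::'a::semiring_0) * (if P then a else 0) = (if P then b * a else 0)" by simp

lemma trace_conj:
  fixes U :: "complex^'n^'n"
  shows "trace (diag_mat e ** (U ** diag_mat r ** adj U)) = (\<Sum>i\<in>UNIV. e i * (\<Sum>k\<in>UNIV. U$i$k * r k * cnj (U$i$k)))"
  unfolding trace_def matrix_matrix_mult_def diag_mat_def adj_def
  by (simp add: if0_mult mult_if0 sum.delta cong: if_cong)

lemma trace_diag:
  shows "trace (diag_mat e ** diag_mat r) = (\<Sum>i\<in>UNIV. e i * r i)"
  unfolding trace_def matrix_matrix_mult_def diag_mat_def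
  by (simp add: if0_mult mult_if0 sum.delta cong: if_cong)

lemma Re_trace_conj:
  fixes U :: "complex^'n^'n"
  shows "Re (trace (hamiltonian E ** (U ** diag_mat (\<lambda>i. complex_of_real (r i)) ** adj U)))
     = (\<Sum>i\<in>UNIV. E i * (\<Sum>k\<in>UNIV. r k * wt U i k))"
proof -
  have eq: "U$i$k * complex_of_real (r k) * cnj (U$i$k) = complex_of_real (r k * wt U i k)" for i k
  proof -
    have "U$i$k * complex_of_real (r k) * cnj (U$i$k) = complex_of_real (r k) * (U$i$k * cnj (U$i$k))"
      by (simp add: ac_simps)
    also have "\<dots> = complex_of_real (r k * wt U i k)" by (simp add: mult_cnj_self wt_def)
    finally show ?thesis .
  qed
  have "trace (hamiltonian E ** (U ** diag_mat (\<lambda>i. complex_of_real (r i)) ** adj U))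
     = (\<Sum>i\<in>UNIV. complex_of_real (E i) * (\<Sum>k\<in>UNIV. complex_of_real (r k * wt U i k)))"
    by (simp only: hamiltonian_def trace_conj eq)
  also have "\<dots> = complex_of_real (\<Sum>i\<in>UNIV. E i * (\<Sum>k\<in>UNIV. r k * wt U i k))" by simp
  finally show ?thesis by simp
qed

lemma Re_trace_diag:
  shows "Re (trace (hamiltonian E ** diag_mat (\<lambda>i. complex_of_real (r i)))) = (\<Sum>i\<in>UNIV. E i * r i)"
  unfolding hamiltonian_def trace_diag by simp

lemma unitary_col:
  assumes "unitary_mat U" shows "(\<Sum>i\<in>UNIV. wt U i k) = 1"
proof -
  have "(adj U ** U)$k$k = 1" using assms by (simp add: unitary_mat_def mat_def)
  then have "(\<Sum>i\<in>UNIV. cnj (U$i$k) * U$i$k) = 1"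
    by (simp add: matrix_matrix_mult_def adj_def)
  then have "complex_of_real (\<Sum>i\<in>UNIV. wt U i k) = 1"
    by (simp add: cnj_mult_self wt_def)
  then show ?thesis by (metis of_real_eq_1_iff)
qed

lemma unitary_row:
  assumes "unitary_mat U" shows "(\<Sum>k\<in>UNIV. wt U i k) = 1"
proof -
  have "(U ** adj U)$i$i = 1" using assms by (simp add: unitary_mat_def mat_def)
  then have "(\<Sum>k\<in>UNIV. U$i$k * cnj (U$i$k)) = 1"
    by (simp add: matrix_matrix_mult_def adj_def)
  then have "complex_of_real (\<Sum>k\<in>UNIV. wt U i k) = 1"
    by (simp add: mult_cnj_self wt_def)
  then show ?thesis by (metis of_real_eq_1_iff)
qed

lemma wt_nonneg: "0 \<le> wt U i k" by (simp add: wt_def)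

definition sw :: "'n \<Rightarrow> 'n \<Rightarrow> 'n \<Rightarrow> 'n" where
  "sw a b i = (if i = a then b else if i = b then a else i)"
definition pmat :: "('n \<Rightarrow> 'n) \<Rightarrow> complex^'n^'n" where
  "pmat s = (\<chi> i j. if j = s i then 1 else 0)"

lemma sw_inj: "sw a b i = sw a b j \<longleftrightarrow> i = j" by (auto simp: sw_def)

lemma pmat_unitary: "unitary_mat (pmat (sw a b))"
proof -
  let ?s = "sw a b"
  have 1: "(pmat ?s ** adj (pmat ?s))$i$j = mat 1 $i$j" for i j
  proof -
    have "(pmat ?s ** adj (pmat ?s))$i$j = (\<Sum>k\<in>UNIV. if k = ?s i then (if k = ?s j then 1 else 0) else 0)"
      unfolding pmat_def adj_def matrix_matrix_mult_def by (simp add: if0_mult if_distrib[of cnj] cong: if_cong)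
    also have "\<dots> = (if i = j then 1 else 0)" by (simp add: sw_inj)
    finally show ?thesis by (simp add: mat_def)
  qed
  have 2: "(adj (pmat ?s) ** pmat ?s)$i$j = mat 1 $i$j" for i j
  proof -
    have "(adj (pmat ?s) ** pmat ?s)$i$j = (\<Sum>k\<in>UNIV. if i = ?s k then (if j = ?s k then 1 else 0) else 0)"
      unfolding pmat_def adj_def matrix_matrix_mult_def by (simp add: if0_mult if_distrib[of cnj] cong: if_cong)
    also have "\<dots> = (\<Sum>k\<in>UNIV. if k = ?s i then (if k = ?s j then 1 else 0) else 0)"
      by (rule sum.cong) (auto simp: sw_def)
    also have "\<dots> = (if i = j then 1 else 0)" by (simp add: sw_inj)
    finally show ?thesis by (simp add: mat_def)
  qed
  show ?thesis using 1 2 unfolding unitary_mat_def by (simp add: vec_eq_iff)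
qed

lemma wt_pmat: "wt (pmat s) i k = (if k = s i then 1 else 0)"
  by (simp add: wt_def pmat_def)
lemma erg_diag:
  assumes lb: "\<And>U. unitary_mat U \<Longrightarrow> m \<le> (\<Sum>i\<in>UNIV. E i * (\<Sum>k\<in>UNIV. r k * wt U i k))"
    and u0: "unitary_mat U0" and att: "(\<Sum>i\<in>UNIV. E i * (\<Sum>k\<in>UNIV. r k * wt U0 i k)) = m"
  shows "ergotropy E (diag_mat (\<lambda>i. complex_of_real (r i))) = (\<Sum>i\<in>UNIV. E i * r i) - m"
proof -
  have "(INF U \<in> {U. unitary_mat U}. Re (trace (hamiltonian E ** (U ** diag_mat (\<lambda>i. complex_of_real (r i)) ** adj U)))) = m"
    unfolding Re_trace_conj
    by (rule cInf_eq_minimum) (use u0 att lb in auto)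
  then show ?thesis unfolding ergotropy_def Re_trace_diag by simp
qed

definition gw :: "4 \<Rightarrow> 4 \<Rightarrow> real" where
  "gw k i = (if i = 0 then gammaW k else if i = 1 then 1 - gammaW k else 0)"

lemma chan_diag: "chanC (diag_mat (\<lambda>i. complex_of_real (p i))) = diag_mat (\<lambda>i. complex_of_real (\<Sum>k\<in>UNIV. p k * gw k i))"
  unfolding chanC_def gamma_def diag_mat_def gw_def
  by (simp add: vec_eq_iff if_distrib[of complex_of_real] cong: if_cong)

lemma rho0_diag: "rho0 = diag_mat (\<lambda>i. complex_of_real (if i = 1 then 0 else 1/3))"
  unfolding rho0_def diag_mat_def by (simp add: vec_eq_iff)

lemma chan_rho0: "chanC rho0 = diag_mat (\<lambda>i. complex_of_real (if i = 0 then 4/9 else if i = 1 then 5/9 else 0))"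
  unfolding rho0_diag chan_diag
  by (simp add: s4 gw_def gammaW_def vec_eq_iff diag_mat_def)

lemma le4: "(0::4) \<le> 0" "(0::4) \<le> 1" "(0::4) \<le> 2" "(0::4) \<le> 3"
  "\<not> (1::4) \<le> 0" "(1::4) \<le> 1" "(1::4) \<le> 2" "(1::4) \<le> 3"
  "\<not> (2::4) \<le> 0" "\<not> (2::4) \<le> 1" "(2::4) \<le> 2" "(2::4) \<le> 3"
  "\<not> (3::4) \<le> 0" "\<not> (3::4) \<le> 1" "\<not> (3::4) \<le> 2" "(3::4) \<le> 3"
  by (simp_all add: less_eq_bit0_def bit0.Rep_numeral bit0.Rep_0 bit0.Rep_1)

lemma psd_diag_nonneg:
  assumes "psd (diag_mat (\<lambda>i. complex_of_real (p i)))" shows "0 \<le> p k"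
proof -
  let ?x = "axis k (1::complex)"
  have "0 \<le> Re (\<Sum>i\<in>UNIV. cnj (?x $ i) * (diag_mat (\<lambda>i. complex_of_real (p i)) *v ?x) $ i)"
    using assms unfolding psd_def by blast
  also have "(\<Sum>i\<in>UNIV. cnj (?x $ i) * (diag_mat (\<lambda>i. complex_of_real (p i)) *v ?x) $ i) = complex_of_real (p k)"
    unfolding matrix_vector_mult_def diag_mat_def axis_def
    by (simp add: if0_mult mult_if0 if_distrib[of cnj] cong: if_cong)
  finally show ?thesis by simp
qed

lemma trace_diag1: "trace (diag_mat (\<lambda>i. complex_of_real (p i))) = complex_of_real (\<Sum>i\<in>UNIV. p i)"
  unfolding trace_def diag_mat_def by simp

lemma state_diag:
  fixes q :: "'n::finite \<Rightarrow> real"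
  assumes "\<And>i. 0 \<le> q i" "(\<Sum>i\<in>UNIV. q i) = 1"
  shows "is_state (diag_mat (\<lambda>i. complex_of_real (q i)))"
proof -
  have a: "adj (diag_mat (\<lambda>i. complex_of_real (q i))) = diag_mat (\<lambda>i. complex_of_real (q i))"
    unfolding adj_def diag_mat_def by (simp add: vec_eq_iff)
  have e: "(\<Sum>i\<in>UNIV. cnj (x $ i) * (diag_mat (\<lambda>i. complex_of_real (q i)) *v x) $ i)
      = complex_of_real (\<Sum>i\<in>UNIV. q i * (cmod (x$i))^2)" for x :: "complex^'n"
  proof -
    have "cnj (x $ i) * (diag_mat (\<lambda>i. complex_of_real (q i)) *v x) $ i = complex_of_real (q i * (cmod (x$i))^2)" for i
    proof -
      have "(diag_mat (\<lambda>i. complex_of_real (q i)) *v x) $ i = complex_of_real (q i) * x $ i"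
        unfolding matrix_vector_mult_def diag_mat_def by (simp add: if0_mult cong: if_cong)
      then have "cnj (x $ i) * (diag_mat (\<lambda>i. complex_of_real (q i)) *v x) $ i = complex_of_real (q i) * (cnj (x $ i) * x $ i)"
        by (simp add: ac_simps)
      also have "\<dots> = complex_of_real (q i * (cmod (x$i))^2)" by (simp add: cnj_mult_self)
      finally show ?thesis .
    qed
    then show ?thesis by simp
  qed
  have p: "psd (diag_mat (\<lambda>i. complex_of_real (q i)))"
    unfolding psd_def e using assms(1) by (auto intro: sum_nonneg)
  show ?thesis unfolding is_state_def using a p assms(2) by (simp add: trace_diag1)
qed

lemma passive_pres:
  assumes "passive_state \<rho>" shows "passive_state (chanC \<rho>)"
proof -
  from assms obtain p where st: "is_state \<rho>" and rho: "\<rho> = diag_mat (\<lambda>i. complex_of_real (p i))"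
    and mono: "\<And>i j. i \<le> j \<Longrightarrow> p j \<le> p i" unfolding passive_state_def by blast
  have nn: "0 \<le> p k" for k using st psd_diag_nonneg unfolding rho is_state_def by blast
  have tr: "(\<Sum>i\<in>UNIV. p i) = 1" using st unfolding rho is_state_def trace_diag1 by (metis of_real_eq_1_iff)
  have m: "p 1 \<le> p 0" "p 2 \<le> p 1" "p 3 \<le> p 2" using mono le4 by auto
  have n3: "0 \<le> p 3" using nn by auto
  define q where "q i = (\<Sum>k\<in>UNIV. p k * gw k i)" for i
  have q0: "q 0 = p 0 + 2/3 * p 1 + 1/3 * p 2" and q1: "q 1 = 1/3 * p 1 + 2/3 * p 2 + p 3"
    and q2: "q 2 = 0" and q3: "q 3 = 0"
    by (simp_all add: q_def s4 gw_def gammaW_def)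
  have qall: "q i = (if i = 0 then p 0 + 2/3 * p 1 + 1/3 * p 2 else if i = 1 then 1/3 * p 1 + 2/3 * p 2 + p 3 else 0)" for i
    using q0 q1 q2 q3 U4 by (cases "i \<in> {0,1,2,3}") auto
  have qnn: "0 \<le> q i" for i unfolding qall using nn[of 0] nn[of 1] nn[of 2] nn[of 3] by auto
  have qs: "(\<Sum>i\<in>UNIV. q i) = 1" using tr by (simp add: s4 q0 q1 q2 q3)
  have qm: "q j \<le> q i" if "i \<le> j" for i j
  proof -
    have "i \<in> {0,1,2,3}" "j \<in> {0,1,2,3}" using U4 by auto
    then show ?thesis using that le4 m n3 nn[of 2] q0 q1 q2 q3 qnn by auto
  qed
  have ch: "chanC \<rho> = diag_mat (\<lambda>i. complex_of_real (q i))" unfolding rho chan_diag q_def ..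
  show ?thesis unfolding passive_state_def ch
  proof (intro conjI exI[of _ q] allI impI)
    show "is_state (diag_mat (\<lambda>i. complex_of_real (q i)))" by (rule state_diag[OF qnn qs])
    show "diag_mat (\<lambda>i. complex_of_real (q i)) = diag_mat (\<lambda>i. complex_of_real (q i))" ..
    fix i j :: 4 assume "i \<le> j" then show "q j \<le> q i" by (rule qm)
  qed
qed

theorem mainTheorem2:
  fixes E :: "4 \<Rightarrow> real"
  assumes "\<And>i j. i < j \<Longrightarrow> E i < E j"
  shows "(\<forall>\<rho>. passive_state \<rho> \<longrightarrow> passive_state (chanC \<rho>))
       \<and> ergotropy E rho0 = (E 3 - E 1) / 3
       \<and> ergotropy E (chanC rho0) = (E 1 - E 0) / 9
       \<and> (E 1 - E 0 > 3 * (E 3 - E 1) \<longrightarrow>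
            ergotropy E (chanC rho0) > ergotropy E rho0)"
proof -
  have e: "E 0 < E 1" "E 1 < E 2" "E 2 < E 3" using assms ord4 by auto
  have rowfacts: "wt U i 0 + wt U i 1 + wt U i 2 + wt U i 3 = 1" if "unitary_mat U" for U :: "complex^4^4" and i
    using unitary_row[OF that, of i] by (simp add: s4)
  have colfacts: "wt U 0 k + wt U 1 k + wt U 2 k + wt U 3 k = 1" if "unitary_mat U" for U :: "complex^4^4" and k
    using unitary_col[OF that, of k] by (simp add: s4)
  have E1: "ergotropy E rho0 = (E 3 - E 1) / 3"
  proof -
    have "ergotropy E rho0 = (\<Sum>i\<in>UNIV. E i * (if i = 1 then 0 else 1/3)) - (E 0 + E 1 + E 2) / 3"
      unfolding rho0_diag
    proof (rule erg_diag)
      fix U :: "complex^4^4" assume u: "unitary_mat U"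
      note r = rowfacts[OF u, of 0] rowfacts[OF u, of 1] rowfacts[OF u, of 2] rowfacts[OF u, of 3]
      note c = colfacts[OF u, of 1]
      have h: "0 \<le> (E 3 - E i) * wt U i 1" if "E i \<le> E 3" for i using that wt_nonneg[of U i 1] by (intro mult_nonneg_nonneg) auto
      have "0 \<le> (E 3 - E 0) * wt U 0 1" "0 \<le> (E 3 - E 1) * wt U 1 1" "0 \<le> (E 3 - E 2) * wt U 2 1"
        using h e by auto
      then show "(E 0 + E 1 + E 2) / 3 \<le> (\<Sum>i\<in>UNIV. E i * (\<Sum>k\<in>UNIV. (if k = 1 then 0 else 1/3) * wt U i k))"
      proof -
        have rE: "E i * wt U i 0 + E i * wt U i 1 + E i * wt U i 2 + E i * wt U i 3 = E i" for i
          using rowfacts[OF u, of i] by (metis distrib_left mult_1_right)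
        have cE: "E 3 * wt U 0 1 + E 3 * wt U 1 1 + E 3 * wt U 2 1 + E 3 * wt U 3 1 = E 3"
          using c by (metis distrib_left mult_1_right)
        show ?thesis using rE[of 0] rE[of 1] rE[of 2] rE[of 3] cE \<open>0 \<le> (E 3 - E 0) * wt U 0 1\<close>
          \<open>0 \<le> (E 3 - E 1) * wt U 1 1\<close> \<open>0 \<le> (E 3 - E 2) * wt U 2 1\<close>
          by (simp add: s4 algebra_simps)
      qed
    next
      show "unitary_mat (pmat (sw 1 3))" by (rule pmat_unitary)
      show "(\<Sum>i\<in>UNIV. E i * (\<Sum>k\<in>UNIV. (if k = 1 then 0 else 1/3) * wt (pmat (sw 1 3)) i k)) = (E 0 + E 1 + E 2) / 3"
        by (simp add: s4 wt_pmat sw_def)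
    qed
    also have "\<dots> = (E 3 - E 1) / 3" by (simp add: s4 field_simps)
    finally show ?thesis .
  qed
  have E2: "ergotropy E (chanC rho0) = (E 1 - E 0) / 9"
  proof -
    have "ergotropy E (chanC rho0) = (\<Sum>i\<in>UNIV. E i * (if i = 0 then 4/9 else if i = 1 then 5/9 else 0)) - (5 * E 0 + 4 * E 1) / 9"
      unfolding chan_rho0
    proof (rule erg_diag)
      fix U :: "complex^4^4" assume u: "unitary_mat U"
      note r = rowfacts[OF u, of 0]
      note c = colfacts[OF u, of 0] colfacts[OF u, of 1]
      have w: "0 \<le> wt U i k" for i k by (rule wt_nonneg)
      have h: "0 \<le> (E i - E 1) * (4 * wt U i 0 + 5 * wt U i 1)" if "E 1 \<le> E i" for i
        using that w[of i 0] w[of i 1] by (intro mult_nonneg_nonneg) auto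
      have H1: "0 \<le> (E 2 - E 1) * (4 * wt U 2 0 + 5 * wt U 2 1)" "0 \<le> (E 3 - E 1) * (4 * wt U 3 0 + 5 * wt U 3 1)"
        using h e by auto
      have H2: "0 \<le> (E 1 - E 0) * (5 - 4 * wt U 0 0 - 5 * wt U 0 1)"
        using e r w[of 0 2] w[of 0 3] w[of 0 0] by (intro mult_nonneg_nonneg) auto
      show "(5 * E 0 + 4 * E 1) / 9 \<le> (\<Sum>i\<in>UNIV. E i * (\<Sum>k\<in>UNIV. (if k = 0 then 4/9 else if k = 1 then 5/9 else 0) * wt U i k))"
      proof -
        have cE: "E 1 * wt U 0 k + E 1 * wt U 1 k + E 1 * wt U 2 k + E 1 * wt U 3 k = E 1" for k
          using colfacts[OF u, of k] by (metis distrib_left mult_1_right)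
        show ?thesis using cE[of 0] cE[of 1] H1 H2 by (simp add: s4 algebra_simps)
      qed
    next
      show "unitary_mat (pmat (sw 0 1))" by (rule pmat_unitary)
      show "(\<Sum>i\<in>UNIV. E i * (\<Sum>k\<in>UNIV. (if k = 0 then 4/9 else if k = 1 then 5/9 else 0) * wt (pmat (sw 0 1)) i k)) = (5 * E 0 + 4 * E 1) / 9"
        by (simp add: s4 wt_pmat sw_def)
    qed
    also have "\<dots> = (E 1 - E 0) / 9" by (simp add: s4 field_simps)
    finally show ?thesis .
  qed
  show ?thesis using passive_pres E1 E2 by auto
qed

end
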